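(* Let $\xi_1,\xi_2,\dots$ be i.i.d. $N(0,1)$, let $0<\alpha<1$ and let $x_\alpha$ be defined by $\mathbf{P}\big(\pi^{-2}\sum_{j\ge1}\xi_j^2j^{-2}>x_\alpha\big)=\alpha$. Let $\boldsymbol\eta=(\eta_j)_{j\ge1}$ be a real square-summable sequence with $\pi^{-2}\sum_{j\ge1}\eta_j^2>c$ for some $c>0$. Then $$\mathbf{P}\Big(\pi^{-2}\sum_{j=1}^\infty\xi_j^2j^{-2}<x_\alpha\Big)>\mathbf{P}\Big(\pi^{-2}\sum_{j=1}^\infty(\xi_j/j+\eta_j)^2<x_\alpha\Big).$$ *)

theory Defs
  imports "HOL-Probability.Probability"
begin

text \<open>The random series \<pi>^-2 * sum_{j>=1} (xi_j / j + eta_j)^2, with the paper's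
  indexing j = 1, 2, ... (the summation index k = j - 1 runs over all naturals).\<close>
definition shifted_series :: "(nat \<Rightarrow> 'a \<Rightarrow> real) \<Rightarrow> (nat \<Rightarrow> real) \<Rightarrow> 'a \<Rightarrow> real" where
  "shifted_series \<xi> \<eta> \<omega> =
     (1 / pi\<^sup>2) * (\<Sum>k. (\<xi> (Suc k) \<omega> / real (Suc k) + \<eta> (Suc k))\<^sup>2)"

end

theory Submission
  imports Defs
begin

lemma phi_less: "\<bar>u\<bar> < \<bar>v\<bar> \<Longrightarrow> std_normal_density v < std_normal_density (u::real)"
proof -
  assume "\<bar>u\<bar> < \<bar>v\<bar>"
  then have "\<bar>u\<bar>^2 < \<bar>v\<bar>^2" by (intro power_strict_mono) auto
  then have "u\<^sup>2 < v\<^sup>2" by simp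
  then show ?thesis unfolding std_normal_density_def by (simp add: divide_less_cancel)
qed

lemma phi_nn_integral: "(\<integral>\<^sup>+t. ennreal (std_normal_density t) \<partial>lborel) = 1"
proof -
  interpret prob_space "density lborel (normal_density 0 1)" by (rule prob_space_normal_density) simp
  have "emeasure (density lborel (normal_density 0 1)) UNIV = 1" using emeasure_space_1 by simp
  then show ?thesis by (simp add: emeasure_density)
qed

lemma D_pos:
  fixes b r :: real assumes b: "b > 0" and r: "r > 0"
  shows "(\<integral>\<^sup>+t. ennreal (std_normal_density t) * indicator {t. \<bar>t+b\<bar> < r} t \<partial>lborel)
       < (\<integral>\<^sup>+t. ennreal (std_normal_density t) * indicator {t. \<bar>t\<bar> < r} t \<partial>lborel)"
proof -
  define A where "A = {t::real. \<bar>t+b\<bar> < r}"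
  define B where "B = {t::real. \<bar>t\<bar> < r}"
  have [measurable]: "A \<in> sets borel" "B \<in> sets borel" unfolding A_def B_def by measurable
  let ?\<phi> = "\<lambda>t. ennreal (std_normal_density t)"
  have "(\<integral>\<^sup>+t. ?\<phi> t * indicator A t \<partial>lborel)
      = (\<integral>\<^sup>+t. ?\<phi> t * indicator (A \<inter> B) t + ?\<phi> t * indicator (A - B) t \<partial>lborel)"
    by (intro nn_integral_cong) (auto split: split_indicator)
  also have "\<dots> = (\<integral>\<^sup>+t. ?\<phi> t * indicator (A \<inter> B) t \<partial>lborel) + (\<integral>\<^sup>+t. ?\<phi> t * indicator (A - B) t \<partial>lborel)"
    by (intro nn_integral_add) auto
  also have "(\<integral>\<^sup>+t. ?\<phi> t * indicator (A - B) t \<partial>lborel)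
      = (\<integral>\<^sup>+u. ?\<phi> (-b + (-1) * u) * indicator (A - B) (-b + (-1) * u) \<partial>lborel)"
    using nn_integral_real_affine[of "\<lambda>t. ?\<phi> t * indicator (A - B) t" "-1" "-b"] by simp
  also have "\<dots> = (\<integral>\<^sup>+u. ?\<phi> (u+b) * indicator (B - A) u \<partial>lborel)"
  proof (intro nn_integral_cong)
    fix u :: real
    have "std_normal_density (-b + (-1) * u) = std_normal_density (u+b)"
      unfolding std_normal_density_def by (simp add: power2_eq_square algebra_simps)
    moreover have "(-b + (-1) * u \<in> A - B) = (u \<in> B - A)"
      unfolding A_def B_def by auto
    ultimately show "?\<phi> (-b + (-1) * u) * indicator (A - B) (-b + (-1) * u) = ?\<phi> (u+b) * indicator (B - A) u"
      by (simp split: split_indicator)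
  qed
  also have "(\<integral>\<^sup>+t. ?\<phi> t * indicator (A \<inter> B) t \<partial>lborel) + (\<integral>\<^sup>+u. ?\<phi> (u+b) * indicator (B - A) u \<partial>lborel)
     = (\<integral>\<^sup>+t. ?\<phi> t * indicator (A \<inter> B) t + ?\<phi> (t+b) * indicator (B - A) t \<partial>lborel)"
    by (intro nn_integral_add[symmetric]) auto
  also have "\<dots> < (\<integral>\<^sup>+t. ?\<phi> t * indicator B t \<partial>lborel)"
  proof (rule nn_integral_less)
    have "(\<integral>\<^sup>+t. ?\<phi> t * indicator (A \<inter> B) t + ?\<phi> (t+b) * indicator (B - A) t \<partial>lborel)
        \<le> (\<integral>\<^sup>+t. ?\<phi> t \<partial>lborel)"
    proof (intro nn_integral_mono)
      fix t :: real
      show "?\<phi> t * indicator (A \<inter> B) t + ?\<phi> (t+b) * indicator (B - A) t \<le> ?\<phi> t"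
      proof (cases "t \<in> B - A")
        case True
        then have "\<bar>t\<bar> < \<bar>t+b\<bar>" unfolding A_def B_def by auto
        then show ?thesis using True phi_less[of t "t+b"] by (auto split: split_indicator)
      qed (auto split: split_indicator)
    qed
    then show "(\<integral>\<^sup>+t. ?\<phi> t * indicator (A \<inter> B) t + ?\<phi> (t+b) * indicator (B - A) t \<partial>lborel) \<noteq> \<infinity>"
      using phi_nn_integral by (auto simp: top_unique)
    show "AE t in lborel. ?\<phi> t * indicator (A \<inter> B) t + ?\<phi> (t+b) * indicator (B - A) t \<le> ?\<phi> t * indicator B t"
    proof (intro AE_I2)
      fix t :: real
      show "?\<phi> t * indicator (A \<inter> B) t + ?\<phi> (t+b) * indicator (B - A) t \<le> ?\<phi> t * indicator B t"
      proof (cases "t \<in> B - A")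
        case True
        then have "\<bar>t\<bar> < \<bar>t+b\<bar>" unfolding A_def B_def by auto
        then show ?thesis using True phi_less[of t "t+b"] by (auto split: split_indicator)
      qed (auto split: split_indicator)
    qed
    show "\<not> (AE t in lborel. ?\<phi> t * indicator B t \<le> ?\<phi> t * indicator (A \<inter> B) t + ?\<phi> (t+b) * indicator (B - A) t)"
    proof
      assume ae: "AE t in lborel. ?\<phi> t * indicator B t \<le> ?\<phi> t * indicator (A \<inter> B) t + ?\<phi> (t+b) * indicator (B - A) t"
      define l where "l = max (-r) (r - b)"
      have lr: "l < r" using b r unfolding l_def by auto
      have "AE t in lborel. t \<notin> {l<..<r}"
      proof (rule AE_mp[OF ae], intro AE_I2 impI)
        fix t :: real
        assume le: "?\<phi> t * indicator B t \<le> ?\<phi> t * indicator (A \<inter> B) t + ?\<phi> (t+b) * indicator (B - A) t"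
        show "t \<notin> {l<..<r}"
        proof
          assume "t \<in> {l<..<r}"
          then have "t \<in> B - A" "\<bar>t\<bar> < \<bar>t+b\<bar>" using b r unfolding A_def B_def l_def by auto
          then show False using le phi_less[of t "t+b"] by (auto split: split_indicator)
        qed
      qed
      then have "emeasure lborel {l<..<r} = 0"
        by (subst (asm) AE_iff_measurable[of "{l<..<r}"]) auto
      then show False using lr by simp
    qed
  qed auto
  finally show ?thesis unfolding A_def B_def .
qed

lemma D_neg:
  fixes b r :: real assumes b: "b < 0" and r: "r > 0"
  shows "(\<integral>\<^sup>+t. ennreal (std_normal_density t) * indicator {t. \<bar>t+b\<bar> < r} t \<partial>lborel)
       < (\<integral>\<^sup>+t. ennreal (std_normal_density t) * indicator {t. \<bar>t\<bar> < r} t \<partial>lborel)"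
proof -
  have "(\<integral>\<^sup>+t. ennreal (std_normal_density t) * indicator {t. \<bar>t+b\<bar> < r} t \<partial>lborel)
    = (\<integral>\<^sup>+t. ennreal (std_normal_density (0 + (-1) * t)) * indicator {t. \<bar>t+b\<bar> < r} (0 + (-1) * t) \<partial>lborel)"
    using nn_integral_real_affine[of "\<lambda>t. ennreal (std_normal_density t) * indicator {t. \<bar>t+b\<bar> < r} t" "-1" 0]
    by simp
  also have "\<dots> = (\<integral>\<^sup>+t. ennreal (std_normal_density t) * indicator {t. \<bar>t+(-b)\<bar> < r} t \<partial>lborel)"
  proof (intro nn_integral_cong)
    fix t :: real
    have "std_normal_density (0 + (-1) * t) = std_normal_density t"
      unfolding std_normal_density_def by simp
    moreover have "\<bar>0 + (-1) * t + b\<bar> = \<bar>t + (-b)\<bar>" by simp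
    ultimately show "ennreal (std_normal_density (0 + (-1) * t)) * indicator {t. \<bar>t+b\<bar> < r} (0 + (-1) * t)
       = ennreal (std_normal_density t) * indicator {t. \<bar>t+(-b)\<bar> < r} t"
      by (simp split: split_indicator)
  qed
  also have "\<dots> < (\<integral>\<^sup>+t. ennreal (std_normal_density t) * indicator {t. \<bar>t\<bar> < r} t \<partial>lborel)"
    using b r by (intro D_pos) auto
  finally show ?thesis .
qed

lemma D_strict:
  fixes b r :: real assumes b: "b \<noteq> 0" and r: "r > 0"
  shows "(\<integral>\<^sup>+t. ennreal (std_normal_density t) * indicator {t. \<bar>t+b\<bar> < r} t \<partial>lborel)
       < (\<integral>\<^sup>+t. ennreal (std_normal_density t) * indicator {t. \<bar>t\<bar> < r} t \<partial>lborel)"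
  using D_pos[OF _ r, of b] D_neg[OF _ r, of b] b by linarith

lemma D_le:
  fixes b r :: real
  shows "(\<integral>\<^sup>+t. ennreal (std_normal_density t) * indicator {t. \<bar>t+b\<bar> < r} t \<partial>lborel)
       \<le> (\<integral>\<^sup>+t. ennreal (std_normal_density t) * indicator {t. \<bar>t\<bar> < r} t \<partial>lborel)"
proof (cases "r > 0 \<and> b \<noteq> 0")
  case True then show ?thesis using D_strict[of b r] by auto
next
  case False
  then consider "b = 0" | "r \<le> 0" by auto
  then show ?thesis
  proof cases
    case 2
    then have "{t::real. \<bar>t+b\<bar> < r} = {}" by auto
    then show ?thesis by simp
  qed simp
qed

lemma D_eq:
  fixes b r :: real
  shows "(\<integral>\<^sup>+t. ennreal (std_normal_density t) * indicator {t. \<bar>t+b\<bar> \<le> r} t \<partial>lborel)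
       = (\<integral>\<^sup>+t. ennreal (std_normal_density t) * indicator {t. \<bar>t+b\<bar> < r} t \<partial>lborel)"
proof (intro nn_integral_cong_AE)
  have "AE t in lborel. t \<noteq> r - b" "AE t in lborel. t \<noteq> -r - b" by (rule AE_lborel_singleton)+
  then show "AE t in lborel. ennreal (std_normal_density t) * indicator {t. \<bar>t+b\<bar> \<le> r} t
       = ennreal (std_normal_density t) * indicator {t. \<bar>t+b\<bar> < r} t"
    by eventually_elim (auto split: split_indicator)
qed

lemma sq_less_iff: "0 \<le> s \<Longrightarrow> (y::real)\<^sup>2 < s \<longleftrightarrow> \<bar>y\<bar> < sqrt s"
  by (metis real_sqrt_abs real_sqrt_less_iff real_sqrt_pow2 abs_of_nonneg real_sqrt_ge_zero)

lemma sq_le_iff: "0 \<le> s \<Longrightarrow> (y::real)\<^sup>2 \<le> s \<longleftrightarrow> \<bar>y\<bar> \<le> sqrt s"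
  by (metis real_sqrt_abs real_sqrt_le_iff real_sqrt_pow2 abs_of_nonneg real_sqrt_ge_zero)

lemma G_set_less:
  assumes d: "d > 0" and s: "s \<ge> 0"
  shows "{\<omega>\<in>space M. ((X \<omega>::real)/d + a)\<^sup>2 < s} = X -` {t. \<bar>t + a*d\<bar> < d * sqrt s} \<inter> space M"
proof -
  have "\<And>t. (t/d + a)\<^sup>2 < s \<longleftrightarrow> \<bar>t + a*d\<bar> < d * sqrt s"
  proof -
    fix t :: real
    have "\<bar>t/d + a\<bar> = \<bar>t + a*d\<bar> / d" using d by (simp add: field_simps abs_div)
    then show "(t/d + a)\<^sup>2 < s \<longleftrightarrow> \<bar>t + a*d\<bar> < d * sqrt s"
      using sq_less_iff[OF s, of "t/d+a"] d by (simp add: divide_less_eq mult.commute)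
  qed
  then show ?thesis by auto
qed

lemma G_set_le:
  assumes d: "d > 0" and s: "s \<ge> 0"
  shows "{\<omega>\<in>space M. ((X \<omega>::real)/d + a)\<^sup>2 \<le> s} = X -` {t. \<bar>t + a*d\<bar> \<le> d * sqrt s} \<inter> space M"
proof -
  have "\<And>t. (t/d + a)\<^sup>2 \<le> s \<longleftrightarrow> \<bar>t + a*d\<bar> \<le> d * sqrt s"
  proof -
    fix t :: real
    have "\<bar>t/d + a\<bar> = \<bar>t + a*d\<bar> / d" using d by (simp add: field_simps abs_div)
    then show "(t/d + a)\<^sup>2 \<le> s \<longleftrightarrow> \<bar>t + a*d\<bar> \<le> d * sqrt s"
      using sq_le_iff[OF s, of "t/d+a"] d by (simp add: divide_le_eq mult.commute)
  qed
  then show ?thesis by auto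
qed

lemma G1:
  assumes X: "distributed M lborel X std_normal_density" and d: "d > 0"
  shows "emeasure M {\<omega>\<in>space M. (X \<omega>/d + a)\<^sup>2 < s} \<le> emeasure M {\<omega>\<in>space M. (X \<omega>/d + 0)\<^sup>2 < s}"
proof (cases "s \<ge> 0")
  case True
  show ?thesis
    unfolding G_set_less[OF d True]
    using D_le[of "a*d" "d * sqrt s"]
    apply (subst distributed_emeasure[OF X], (simp only: sets_lborel, measurable))+
    done
next
  case False
  then have e: "{\<omega>\<in>space M. (X \<omega>/d + a)\<^sup>2 < s} = {}" by (auto simp: not_le) (smt (verit) zero_le_power2)
  show ?thesis by (subst e) simp
qed

lemma G2:
  assumes X: "distributed M lborel X std_normal_density" and d: "d > 0" and a: "a \<noteq> 0" and s: "s > 0"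
  shows "emeasure M {\<omega>\<in>space M. (X \<omega>/d + a)\<^sup>2 \<le> s} < emeasure M {\<omega>\<in>space M. (X \<omega>/d + 0)\<^sup>2 < s}"
proof -
  have s0: "s \<ge> 0" using s by simp
  show ?thesis
    unfolding G_set_less[OF d s0] G_set_le[OF d s0]
    using D_strict[of "a*d" "d * sqrt s"] D_eq[of "a*d" "d * sqrt s"] a d s
    apply (subst distributed_emeasure[OF X], (simp only: sets_lborel, measurable))+
    done
qed

lemma G3:
  assumes X: "distributed M lborel X std_normal_density"
  shows "emeasure M {\<omega>\<in>space M. X \<omega> = (0::real)} = 0"
proof -
  have "{\<omega>\<in>space M. X \<omega> = (0::real)} = X -` {0} \<inter> space M" by auto
  moreover have "(\<integral>\<^sup>+t. ennreal (std_normal_density t) * indicator {0} t \<partial>lborel) = 0"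
    apply (subst nn_integral_0_iff_AE, simp)
    by (rule eventually_mono[OF AE_lborel_singleton[of "0::real"]]) (auto split: split_indicator)
  ultimately show ?thesis
    apply (subst (asm) distributed_emeasure[OF X, symmetric], simp)
    by simp
qed

lemma indep_emeasure:
  assumes P: "prob_space M"
    and ind: "prob_space.indep_var M N W N2 Z"
    and Pm: "{p \<in> space (N \<Otimes>\<^sub>M N2). Q (fst p) (snd p)} \<in> sets (N \<Otimes>\<^sub>M N2)"
  shows "emeasure M {\<omega>\<in>space M. Q (W \<omega>) (Z \<omega>)} = (\<integral>\<^sup>+w. emeasure M {\<omega>\<in>space M. Q w (Z \<omega>)} \<partial>distr M N W)"
proof -
  interpret prob_space M by fact
  have rvW[measurable]: "W \<in> measurable M N" using ind by (rule indep_var_rv1)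
  have rvZ[measurable]: "Z \<in> measurable M N2" using ind by (rule indep_var_rv2)
  have eq: "distr M N W \<Otimes>\<^sub>M distr M N2 Z = distr M (N \<Otimes>\<^sub>M N2) (\<lambda>x. (W x, Z x))"
    using ind indep_var_distribution_eq by blast
  define A where "A = {p \<in> space (N \<Otimes>\<^sub>M N2). Q (fst p) (snd p)}"
  have A[measurable]: "A \<in> sets (N \<Otimes>\<^sub>M N2)" using Pm unfolding A_def .
  interpret Zd: prob_space "distr M N2 Z" by (rule prob_space_distr) simp
  have "emeasure M {\<omega>\<in>space M. Q (W \<omega>) (Z \<omega>)} = emeasure (distr M (N \<Otimes>\<^sub>M N2) (\<lambda>x. (W x, Z x))) A"
  proof (subst emeasure_distr)
    show "(\<lambda>x. (W x, Z x)) \<in> measurable M (N \<Otimes>\<^sub>M N2)" by measurable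
    show "A \<in> sets (N \<Otimes>\<^sub>M N2)" by (rule A)
    show "emeasure M {\<omega> \<in> space M. Q (W \<omega>) (Z \<omega>)} = emeasure M ((\<lambda>x. (W x, Z x)) -` A \<inter> space M)"
      using measurable_space[OF rvW] measurable_space[OF rvZ] unfolding A_def
      by (intro arg_cong[where f="emeasure M"]) (auto simp: space_pair_measure)
  qed
  also have "\<dots> = emeasure (distr M N W \<Otimes>\<^sub>M distr M N2 Z) A" by (simp add: eq)
  also have "\<dots> = (\<integral>\<^sup>+w. emeasure (distr M N2 Z) (Pair w -` A) \<partial>distr M N W)"
  proof (rule Zd.emeasure_pair_measure_alt)
    have "sets (distr M N W \<Otimes>\<^sub>M distr M N2 Z) = sets (N \<Otimes>\<^sub>M N2)"
      by (intro sets_pair_measure_cong) auto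
    then show "A \<in> sets (distr M N W \<Otimes>\<^sub>M distr M N2 Z)" using A by simp
  qed
  also have "\<dots> = (\<integral>\<^sup>+w. emeasure M {\<omega>\<in>space M. Q w (Z \<omega>)} \<partial>distr M N W)"
  proof (intro nn_integral_cong)
    fix w assume w: "w \<in> space (distr M N W)"
    have "Pair w -` A \<in> sets N2" using A by (rule sets_Pair1)
    then have "emeasure (distr M N2 Z) (Pair w -` A) = emeasure M (Z -` (Pair w -` A) \<inter> space M)"
      by (rule emeasure_distr[OF rvZ])
    also have "Z -` (Pair w -` A) \<inter> space M = {\<omega>\<in>space M. Q w (Z \<omega>)}"
      using w measurable_space[OF rvZ] unfolding A_def by (auto simp: space_pair_measure)
    finally show "emeasure (distr M N2 Z) (Pair w -` A) = emeasure M {\<omega>\<in>space M. Q w (Z \<omega>)}" .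
  qed
  finally show ?thesis .
qed

lemma indep_split:
  fixes \<xi> :: "nat \<Rightarrow> 'a \<Rightarrow> real"
  assumes P: "prob_space M" and ind: "prob_space.indep_vars M (\<lambda>_. borel) \<xi> {1..}"
  shows "prob_space.indep_var M (PiM UNIV (\<lambda>_. borel)) (\<lambda>\<omega>. (\<lambda>i. if i = k then 0 else \<xi> (Suc i) \<omega>)) (PiM UNIV (\<lambda>_. borel)) (\<lambda>\<omega>. \<lambda>i. \<xi> (Suc k) \<omega>)"
proof -
  interpret prob_space M by fact
  define K where "K = (\<lambda>b::bool. if b then {1..} - {Suc k} else {Suc k})"
  have h1: "indep_vars (\<lambda>b. PiM (K b) (\<lambda>_. borel)) (\<lambda>b \<omega>. restrict (\<lambda>i. \<xi> i \<omega>) (K b)) UNIV"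
    by (rule indep_vars_restrict[OF ind]) (auto simp: K_def disjoint_family_on_def)
  have h2: "(\<lambda>b. PiM (K b) (\<lambda>_. borel)) = case_bool (PiM (K True) (\<lambda>_. borel)) (PiM (K False) (\<lambda>_. borel))"
    by (auto simp: fun_eq_iff split: bool.split)
  have h3: "(\<lambda>b \<omega>. restrict (\<lambda>i. \<xi> i \<omega>) (K b)) = case_bool (\<lambda>\<omega>. restrict (\<lambda>i. \<xi> i \<omega>) (K True)) (\<lambda>\<omega>. restrict (\<lambda>i. \<xi> i \<omega>) (K False))"
    by (auto simp: fun_eq_iff split: bool.split)
  have "indep_var (PiM (K True) (\<lambda>_. borel)) (\<lambda>\<omega>. restrict (\<lambda>i. \<xi> i \<omega>) (K True))
     (PiM (K False) (\<lambda>_. borel)) (\<lambda>\<omega>. restrict (\<lambda>i. \<xi> i \<omega>) (K False))"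
    using h1 unfolding indep_var_def h2[symmetric] h3[symmetric] .
  moreover have "(\<lambda>f. \<lambda>i. if i = k then 0 else f (Suc i)) \<in> measurable (PiM (K True) (\<lambda>_. borel)) (PiM UNIV (\<lambda>_. borel::real measure))"
  proof (rule measurable_PiM_single')
    fix i :: nat
    show "(\<lambda>f. if i = k then 0 else f (Suc i)) \<in> borel_measurable (PiM (K True) (\<lambda>_. borel))"
    proof (cases "i = k")
      case False
      then have "Suc i \<in> K True" by (auto simp: K_def)
      then show ?thesis using False by simp
    qed simp
  qed auto
  moreover have "(\<lambda>f. \<lambda>i. f (Suc k)) \<in> measurable (PiM (K False) (\<lambda>_. borel)) (PiM UNIV (\<lambda>_. borel::real measure))"
    by (rule measurable_PiM_single') (auto simp: K_def)
  ultimately have c: "indep_var (PiM UNIV (\<lambda>_. borel)) ((\<lambda>f. \<lambda>i. if i = k then 0 else f (Suc i)) \<circ> (\<lambda>\<omega>. restrict (\<lambda>i. \<xi> i \<omega>) (K True)))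
     (PiM UNIV (\<lambda>_. borel)) ((\<lambda>f. \<lambda>i. f (Suc k)) \<circ> (\<lambda>\<omega>. restrict (\<lambda>i. \<xi> i \<omega>) (K False)))"
    by (rule indep_var_compose)
  have e1: "((\<lambda>f. \<lambda>i. if i = k then 0 else f (Suc i)) \<circ> (\<lambda>\<omega>. restrict (\<lambda>i. \<xi> i \<omega>) (K True)))
      = (\<lambda>\<omega>. (\<lambda>i. if i = k then 0 else \<xi> (Suc i) \<omega>))"
    by (auto simp: fun_eq_iff K_def)
  have e2: "((\<lambda>f. \<lambda>i. f (Suc k)) \<circ> (\<lambda>\<omega>. restrict (\<lambda>i. \<xi> i \<omega>) (K False))) = (\<lambda>\<omega>. \<lambda>i. \<xi> (Suc k) \<omega>)"
    by (auto simp: fun_eq_iff K_def)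
  show ?thesis using c unfolding e1 e2 .
qed

definition psum :: "(nat \<Rightarrow> 'a \<Rightarrow> real) \<Rightarrow> (nat \<Rightarrow> real) \<Rightarrow> nat \<Rightarrow> 'a \<Rightarrow> real" where
  "psum \<xi> a n \<omega> = (\<Sum>k<n. (\<xi> (Suc k) \<omega> / real (Suc k) + a k)\<^sup>2)"

locale L14 = prob_space M for M :: "'a measure" +
  fixes \<xi> :: "nat \<Rightarrow> 'a \<Rightarrow> real"
  assumes ind: "indep_vars (\<lambda>_. borel) \<xi> {1..}"
    and dist: "\<And>j. j \<ge> 1 \<Longrightarrow> distributed M lborel (\<xi> j) std_normal_density"
begin

lemma distS: "distributed M lborel (\<xi> (Suc k)) std_normal_density"
  by (rule dist) simp

lemma measS[measurable]: "\<xi> (Suc k) \<in> borel_measurable M"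
  using distributed_measurable[OF distS[of k]] by simp

lemma psum_meas[measurable]: "psum \<xi> a n \<in> borel_measurable M"
  unfolding psum_def by measurable

lemma indepS: "indep_var (PiM UNIV (\<lambda>_. borel)) (\<lambda>\<omega>. (\<lambda>i. if i = k then 0 else \<xi> (Suc i) \<omega>))
   (PiM UNIV (\<lambda>_. borel)) (\<lambda>\<omega>. \<lambda>i. \<xi> (Suc k) \<omega>)"
  by (rule indep_split[OF prob_space_axioms ind])

lemma step_repr:
  assumes k: "k < n"
  shows "emeasure M {\<omega>\<in>space M. psum \<xi> b n \<omega> < x}
    = (\<integral>\<^sup>+w. emeasure M {\<omega>\<in>space M. (\<xi> (Suc k) \<omega> / real (Suc k) + b k)\<^sup>2 < x - (\<Sum>i\<in>{..<n}-{k}. (w i / real (Suc i) + b i)\<^sup>2)}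
        \<partial>distr M (PiM UNIV (\<lambda>_. borel)) (\<lambda>\<omega>. (\<lambda>i. if i = k then 0 else \<xi> (Suc i) \<omega>)))"
proof -
  define V where "V = (\<lambda>\<omega>. (\<lambda>i. if i = k then 0 else \<xi> (Suc i) \<omega>))"
  define Z where "Z = (\<lambda>\<omega>. \<lambda>i::nat. \<xi> (Suc k) \<omega>)"
  define Q where "Q = (\<lambda>w::nat\<Rightarrow>real. \<lambda>z::nat\<Rightarrow>real. (z 0 / real (Suc k) + b k)\<^sup>2 < x - (\<Sum>i\<in>{..<n}-{k}. (w i / real (Suc i) + b i)\<^sup>2))"
  have "{\<omega>\<in>space M. psum \<xi> b n \<omega> < x} = {\<omega>\<in>space M. Q (V \<omega>) (Z \<omega>)}"
  proof -
    have "\<And>\<omega>. psum \<xi> b n \<omega> = (\<xi> (Suc k) \<omega> / real (Suc k) + b k)\<^sup>2 + (\<Sum>i\<in>{..<n}-{k}. (V \<omega> i / real (Suc i) + b i)\<^sup>2)"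
    proof -
      fix \<omega>
      have "psum \<xi> b n \<omega> = (\<xi> (Suc k) \<omega> / real (Suc k) + b k)\<^sup>2 + (\<Sum>i\<in>{..<n}-{k}. (\<xi> (Suc i) \<omega> / real (Suc i) + b i)\<^sup>2)"
        unfolding psum_def using k by (subst sum.remove[of _ k]) auto
      also have "(\<Sum>i\<in>{..<n}-{k}. (\<xi> (Suc i) \<omega> / real (Suc i) + b i)\<^sup>2) = (\<Sum>i\<in>{..<n}-{k}. (V \<omega> i / real (Suc i) + b i)\<^sup>2)"
        by (intro sum.cong) (auto simp: V_def)
      finally show "psum \<xi> b n \<omega> = (\<xi> (Suc k) \<omega> / real (Suc k) + b k)\<^sup>2 + (\<Sum>i\<in>{..<n}-{k}. (V \<omega> i / real (Suc i) + b i)\<^sup>2)" .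
    qed
    then show ?thesis unfolding Q_def Z_def by (auto simp: algebra_simps)
  qed
  also have "emeasure M \<dots> = (\<integral>\<^sup>+w. emeasure M {\<omega>\<in>space M. Q w (Z \<omega>)} \<partial>distr M (PiM UNIV (\<lambda>_. borel)) V)"
  proof (rule indep_emeasure[OF prob_space_axioms])
    show "indep_var (PiM UNIV (\<lambda>_. borel)) V (PiM UNIV (\<lambda>_. borel)) Z"
      using indepS[of k] unfolding V_def Z_def .
    show "{p \<in> space (PiM UNIV (\<lambda>_. borel) \<Otimes>\<^sub>M PiM UNIV (\<lambda>_. borel)). Q (fst p) (snd p)}
      \<in> sets (PiM UNIV (\<lambda>_. borel) \<Otimes>\<^sub>M PiM UNIV (\<lambda>_. borel::real measure))"
      unfolding Q_def by measurable
  qed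
  finally show ?thesis unfolding Q_def Z_def V_def by simp
qed

lemma step:
  "emeasure M {\<omega>\<in>space M. psum \<xi> a n \<omega> < x} \<le> emeasure M {\<omega>\<in>space M. psum \<xi> (a(k:=0)) n \<omega> < x}"
proof (cases "k < n")
  case True
  have eq: "(\<Sum>i\<in>{..<n}-{k}. (w i / real (Suc i) + (a(k:=0)) i)\<^sup>2) = (\<Sum>i\<in>{..<n}-{k}. (w i / real (Suc i) + a i)\<^sup>2)" for w :: "nat \<Rightarrow> real"
    by (intro sum.cong) auto
  show ?thesis
    unfolding step_repr[OF True, of a] step_repr[OF True, of "a(k:=0)"] eq
  proof (intro nn_integral_mono)
    fix w :: "nat \<Rightarrow> real"
    show "emeasure M {\<omega> \<in> space M. (\<xi> (Suc k) \<omega> / real (Suc k) + a k)\<^sup>2 < x - (\<Sum>i\<in>{..<n} - {k}. (w i / real (Suc i) + a i)\<^sup>2)}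
      \<le> emeasure M {\<omega> \<in> space M. (\<xi> (Suc k) \<omega> / real (Suc k) + (a(k := 0)) k)\<^sup>2 < x - (\<Sum>i\<in>{..<n} - {k}. (w i / real (Suc i) + a i)\<^sup>2)}"
      using G1[OF distS[of k], of "real (Suc k)" "a k"] by simp
  qed
next
  case False
  have "psum \<xi> a n = psum \<xi> (a(k:=0)) n"
    unfolding psum_def using False by (intro ext sum.cong) auto
  then show ?thesis by simp
qed

lemma steps:
  assumes "finite F"
  shows "emeasure M {\<omega>\<in>space M. psum \<xi> a n \<omega> < x} \<le> emeasure M {\<omega>\<in>space M. psum \<xi> (\<lambda>i. if i \<in> F then 0 else a i) n \<omega> < x}"
  using assms
proof (induction F rule: finite_induct)
  case empty then show ?case by simp
next
  case (insert k F)
  have "(\<lambda>i. if i \<in> insert k F then 0 else a i) = (\<lambda>i. if i \<in> F then 0 else a i)(k := 0)"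
    by auto
  then show ?case using insert.IH step[of "\<lambda>i. if i \<in> F then 0 else a i" n x k] by simp
qed

lemma AE_summable: "AE \<omega> in M. summable (\<lambda>k. (\<xi> (Suc k) \<omega> / real (Suc k))\<^sup>2)"
proof -
  have m1: "(\<integral>\<^sup>+\<omega>. ennreal ((\<xi> (Suc k) \<omega>)\<^sup>2) \<partial>M) = 1" for k
  proof -
    have "(\<integral>\<^sup>+\<omega>. ennreal ((\<xi> (Suc k) \<omega>)\<^sup>2) \<partial>M) = (\<integral>\<^sup>+t. ennreal (std_normal_density t) * ennreal (t\<^sup>2) \<partial>lborel)"
      by (subst distributed_nn_integral[OF distS[of k], symmetric]) auto
    also have "\<dots> = (\<integral>\<^sup>+t. ennreal (std_normal_density t * t ^ (2 * 1)) \<partial>lborel)"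
      by (intro nn_integral_cong) (simp add: ennreal_mult)
    also have "\<dots> = ennreal (integral\<^sup>L lborel (\<lambda>t. std_normal_density t * t ^ (2 * 1)))"
      by (intro nn_integral_eq_integral integrable_std_normal_moment) auto
    also have "\<dots> = 1" by (simp only: integral_std_normal_moment_even) simp
    finally show ?thesis .
  qed
  have "(\<integral>\<^sup>+\<omega>. (\<Sum>k. ennreal ((\<xi> (Suc k) \<omega> / real (Suc k))\<^sup>2)) \<partial>M)
      = (\<Sum>k. \<integral>\<^sup>+\<omega>. ennreal ((\<xi> (Suc k) \<omega> / real (Suc k))\<^sup>2) \<partial>M)"
    by (rule nn_integral_suminf) measurable
  also have "\<dots> = (\<Sum>k. ennreal (1 / (real (Suc k))\<^sup>2))"
  proof (intro suminf_cong)
    fix k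
    have "(\<integral>\<^sup>+\<omega>. ennreal ((\<xi> (Suc k) \<omega> / real (Suc k))\<^sup>2) \<partial>M)
       = (\<integral>\<^sup>+\<omega>. ennreal (1 / (real (Suc k))\<^sup>2) * ennreal ((\<xi> (Suc k) \<omega>)\<^sup>2) \<partial>M)"
      by (intro nn_integral_cong) (simp add: ennreal_mult[symmetric] power_divide)
    also have "\<dots> = ennreal (1 / (real (Suc k))\<^sup>2)"
      by (subst nn_integral_cmult) (auto simp: m1)
    finally show "(\<integral>\<^sup>+\<omega>. ennreal ((\<xi> (Suc k) \<omega> / real (Suc k))\<^sup>2) \<partial>M) = ennreal (1 / (real (Suc k))\<^sup>2)" .
  qed
  also have "\<dots> = ennreal (\<Sum>k. 1 / (real (Suc k))\<^sup>2)"
  proof (rule suminf_ennreal2)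
    have "summable (\<lambda>n. inverse (real n ^ 2))" by (rule inverse_power_summable) simp
    then have "summable (\<lambda>n. inverse (real (Suc n) ^ 2))" by (subst summable_Suc_iff)
    then show "summable (\<lambda>k. 1 / (real (Suc k))\<^sup>2)" by (simp add: divide_inverse)
  qed simp
  finally have fin: "(\<integral>\<^sup>+\<omega>. (\<Sum>k. ennreal ((\<xi> (Suc k) \<omega> / real (Suc k))\<^sup>2)) \<partial>M) \<noteq> \<infinity>" by simp
  have "AE \<omega> in M. (\<Sum>k. ennreal ((\<xi> (Suc k) \<omega> / real (Suc k))\<^sup>2)) \<noteq> \<infinity>"
    by (rule nn_integral_PInf_AE[OF _ fin]) measurable
  then show ?thesis
    by eventually_elim (rule summable_suminf_not_top, auto)
qed

end

lemma suminf_split_one: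
  fixes f :: "nat \<Rightarrow> real"
  assumes "summable f"
  shows "suminf f = f j0 + (\<Sum>i. if i = j0 then 0 else f i)"
proof -
  have e: "(\<lambda>i. if i = j0 then 0 else f i) = (\<lambda>i. f i - (if i = j0 then f i else 0))" by auto
  have "(\<Sum>i. f i - (if i = j0 then f i else 0)) = suminf f - (\<Sum>i. if i = j0 then f i else 0)"
    using suminf_diff[OF assms summable_single[of j0 f]] by simp
  moreover have "(\<Sum>i. if i = j0 then f i else 0) = f j0" using sums_single[of j0 f] by (rule sums_unique[symmetric])
  ultimately show ?thesis unfolding e by simp
qed

lemma summable_split_one:
  fixes f :: "nat \<Rightarrow> real"
  assumes "summable f"
  shows "summable (\<lambda>i. if i = j0 then 0 else f i)"
proof -
  have e: "(\<lambda>i. if i = j0 then 0 else f i) = (\<lambda>i. f i - (if i = j0 then f i else 0))" by auto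
  show ?thesis unfolding e by (intro summable_diff assms summable_single)
qed

context L14 begin

lemma G_point:
  "emeasure M {\<omega>\<in>space M. \<xi> (Suc k) \<omega> = v} = 0"
proof -
  have "{\<omega>\<in>space M. \<xi> (Suc k) \<omega> = v} = \<xi> (Suc k) -` {v} \<inter> space M" by auto
  moreover have "(\<integral>\<^sup>+t. ennreal (std_normal_density t) * indicator {v} t \<partial>lborel) = 0"
    apply (subst nn_integral_0_iff_AE, simp)
    by (rule eventually_mono[OF AE_lborel_singleton[of v]]) (auto split: split_indicator)
  ultimately show ?thesis
    apply (subst (asm) distributed_emeasure[OF distS, symmetric], simp)
    by simp
qed

lemma G4:
  assumes "s \<le> 0" "d > 0"
  shows "emeasure M {\<omega>\<in>space M. (\<xi> (Suc k) \<omega> / d + c)\<^sup>2 \<le> s} = 0"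
proof -
  have "{\<omega>\<in>space M. (\<xi> (Suc k) \<omega> / d + c)\<^sup>2 \<le> s} \<subseteq> {\<omega>\<in>space M. \<xi> (Suc k) \<omega> = - c * d}"
  proof safe
    fix \<omega> assume "\<omega> \<in> space M" "(\<xi> (Suc k) \<omega> / d + c)\<^sup>2 \<le> s"
    then have "(\<xi> (Suc k) \<omega> / d + c)\<^sup>2 = 0" using assms(1) by (smt (verit) zero_le_power2)
    then have "\<xi> (Suc k) \<omega> / d = - c" by simp
    then show "\<xi> (Suc k) \<omega> = - c * d" using assms(2) by (simp add: field_simps)
  qed
  moreover have "{\<omega>\<in>space M. \<xi> (Suc k) \<omega> = - c * d} \<in> sets M" by measurable
  ultimately have "emeasure M {\<omega>\<in>space M. (\<xi> (Suc k) \<omega> / d + c)\<^sup>2 \<le> s} \<le> emeasure M {\<omega>\<in>space M. \<xi> (Suc k) \<omega> = - c * d}"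
    by (intro emeasure_mono)
  then show ?thesis using G_point[of k "- c * d"] by simp
qed

end

lemma sq_bound: "(y + b)\<^sup>2 \<le> 2*y\<^sup>2 + 2*(b::real)\<^sup>2"
proof -
  have "0 \<le> (y - b)\<^sup>2" by simp
  then show ?thesis by (simp add: power2_eq_square algebra_simps)
qed

context L14 begin

lemma main:
  fixes a :: "nat \<Rightarrow> real" and x :: real and j0 :: nat
  assumes sa: "summable (\<lambda>k. (a k)\<^sup>2)" and aj0: "a j0 \<noteq> 0"
    and pos: "emeasure M {\<omega>\<in>space M. (\<Sum>k. (\<xi> (Suc k) \<omega> / real (Suc k))\<^sup>2) \<le> x} \<noteq> 0"
  shows "emeasure M {\<omega>\<in>space M. (\<Sum>k. (\<xi> (Suc k) \<omega> / real (Suc k) + a k)\<^sup>2) < x}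
       < emeasure M {\<omega>\<in>space M. (\<Sum>k. (\<xi> (Suc k) \<omega> / real (Suc k))\<^sup>2) < x}"
proof -
  define V where "V = (\<lambda>\<omega>. \<lambda>i. if i = j0 then 0 else \<xi> (Suc i) \<omega>)"
  define h where "h = (\<lambda>w::nat\<Rightarrow>real. \<Sum>i. (w i / real (Suc i))\<^sup>2)"
  define a' where "a' = (\<lambda>i. if i = j0 then a j0 else 0)"
  define d where "d = real (Suc j0)"
  have d: "d > 0" unfolding d_def by simp
  have Vm[measurable]: "V \<in> measurable M (PiM UNIV (\<lambda>_. borel))"
    unfolding V_def by (rule measurable_PiM_single') auto
  have hm[measurable]: "h \<in> borel_measurable (PiM UNIV (\<lambda>_. borel))"
    unfolding h_def by measurable
  have AEs: "AE \<omega> in M. summable (\<lambda>k. (\<xi> (Suc k) \<omega> / real (Suc k))\<^sup>2)" by (rule AE_summable)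
  have AEsa: "AE \<omega> in M. summable (\<lambda>k. (\<xi> (Suc k) \<omega> / real (Suc k) + a k)\<^sup>2)"
    using AEs
  proof eventually_elim
    case (elim \<omega>)
    show ?case
    proof (rule summable_comparison_test')
      show "summable (\<lambda>k. 2 * (\<xi> (Suc k) \<omega> / real (Suc k))\<^sup>2 + 2 * (a k)\<^sup>2)"
        using elim sa by (intro summable_add summable_mult) auto
      fix k :: nat
      show "norm ((\<xi> (Suc k) \<omega> / real (Suc k) + a k)\<^sup>2) \<le> 2 * (\<xi> (Suc k) \<omega> / real (Suc k))\<^sup>2 + 2 * (a k)\<^sup>2"
        using sq_bound[of "\<xi> (Suc k) \<omega> / real (Suc k)" "a k"] by simp
    qed
  qed
  have s12: "emeasure M {\<omega>\<in>space M. (\<Sum>k. (\<xi> (Suc k) \<omega> / real (Suc k) + a k)\<^sup>2) < x}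
      \<le> emeasure M {\<omega>\<in>space M. psum \<xi> a' n \<omega> < x}" if n: "j0 < n" for n
  proof -
    have "emeasure M {\<omega>\<in>space M. (\<Sum>k. (\<xi> (Suc k) \<omega> / real (Suc k) + a k)\<^sup>2) < x}
      \<le> emeasure M {\<omega>\<in>space M. psum \<xi> a n \<omega> < x}"
    proof (rule emeasure_mono_AE)
      show "AE \<omega> in M. \<omega> \<in> {\<omega>\<in>space M. (\<Sum>k. (\<xi> (Suc k) \<omega> / real (Suc k) + a k)\<^sup>2) < x}
          \<longrightarrow> \<omega> \<in> {\<omega>\<in>space M. psum \<xi> a n \<omega> < x}"
        using AEsa
      proof eventually_elim
        case (elim \<omega>)
        have "psum \<xi> a n \<omega> \<le> (\<Sum>k. (\<xi> (Suc k) \<omega> / real (Suc k) + a k)\<^sup>2)"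
          unfolding psum_def using elim by (intro sum_le_suminf) auto
        then show ?case by auto
      qed
    qed measurable
    also have "\<dots> \<le> emeasure M {\<omega>\<in>space M. psum \<xi> (\<lambda>i. if i \<in> {..<n} - {j0} then 0 else a i) n \<omega> < x}"
      by (rule steps) simp
    also have "psum \<xi> (\<lambda>i. if i \<in> {..<n} - {j0} then 0 else a i) n = psum \<xi> a' n"
      unfolding psum_def a'_def by (intro ext sum.cong) auto
    finally show ?thesis .
  qed
  define E where "E = (\<lambda>m. {\<omega>\<in>space M. psum \<xi> a' (m + Suc j0) \<omega> < x})"
  have Em[measurable]: "E m \<in> sets M" for m unfolding E_def by measurable
  have psum_mono: "psum \<xi> a' n \<omega> \<le> psum \<xi> a' n' \<omega>" if "n \<le> n'" for n n' \<omega>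
    unfolding psum_def using that by (intro sum_mono2) auto
  have decE: "decseq E"
  proof (unfold decseq_def E_def, safe)
    fix m n \<omega> assume "m \<le> n" "psum \<xi> a' (n + Suc j0) \<omega> < x"
    moreover have "psum \<xi> a' (m + Suc j0) \<omega> \<le> psum \<xi> a' (n + Suc j0) \<omega>"
      using \<open>m \<le> n\<close> by (intro psum_mono) simp
    ultimately show "psum \<xi> a' (m + Suc j0) \<omega> < x" by simp
  qed
  have ident: "psum \<xi> a' m \<omega> = (\<xi> (Suc j0) \<omega> / d + a j0)\<^sup>2 + (\<Sum>i<m. (V \<omega> i / real (Suc i))\<^sup>2)"
    if m: "j0 < m" for m \<omega>
  proof -
    have "psum \<xi> a' m \<omega> = (\<xi> (Suc j0) \<omega> / d + a j0)\<^sup>2 + (\<Sum>i\<in>{..<m}-{j0}. (\<xi> (Suc i) \<omega> / real (Suc i) + a' i)\<^sup>2)"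
      unfolding psum_def using m by (subst sum.remove[of _ j0]) (auto simp: a'_def d_def)
    also have "(\<Sum>i\<in>{..<m}-{j0}. (\<xi> (Suc i) \<omega> / real (Suc i) + a' i)\<^sup>2) = (\<Sum>i\<in>{..<m}-{j0}. (V \<omega> i / real (Suc i))\<^sup>2)"
      by (intro sum.cong) (auto simp: a'_def V_def)
    also have "\<dots> = (\<Sum>i<m. (V \<omega> i / real (Suc i))\<^sup>2)"
      using m by (subst (2) sum.remove[of _ j0]) (auto simp: V_def)
    finally show ?thesis .
  qed
  define B1 where "B1 = {\<omega>\<in>space M. (\<xi> (Suc j0) \<omega> / d + a j0)\<^sup>2 \<le> x - h (V \<omega>)}"
  have B1m[measurable]: "B1 \<in> sets M" unfolding B1_def by measurable
  have sub: "(\<Inter>m. E m) \<subseteq> B1"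
  proof
    fix \<omega> assume "\<omega> \<in> (\<Inter>m. E m)"
    then have om: "\<omega> \<in> space M" and lt: "\<And>m. psum \<xi> a' (m + Suc j0) \<omega> < x" unfolding E_def by auto
    define c0 where "c0 = (\<xi> (Suc j0) \<omega> / d + a j0)\<^sup>2"
    define g where "g = (\<lambda>i. (V \<omega> i / real (Suc i))\<^sup>2)"
    have g0: "\<And>i. 0 \<le> g i" unfolding g_def by simp
    have bnd: "(\<Sum>i<n. g i) \<le> x - c0" for n
    proof -
      have "(\<Sum>i<n. g i) \<le> (\<Sum>i<n + Suc j0. g i)" using g0 by (intro sum_mono2) auto
      also have "\<dots> < x - c0" using lt[of n] ident[of "n + Suc j0" \<omega>] unfolding c0_def g_def by simp
      finally show ?thesis by simp
    qed
    have sg: "summable g"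
      by (rule bounded_imp_summable[of _ "x - c0"]) (use g0 bnd[of "Suc _"] in \<open>auto simp: lessThan_Suc_atMost\<close>)
    have "suminf g \<le> x - c0" by (rule suminf_le_const[OF sg bnd])
    then show "\<omega> \<in> B1" using om unfolding B1_def h_def g_def c0_def by simp
  qed
  have s3: "emeasure M {\<omega>\<in>space M. (\<Sum>k. (\<xi> (Suc k) \<omega> / real (Suc k) + a k)\<^sup>2) < x} \<le> emeasure M B1"
  proof -
    have "emeasure M {\<omega>\<in>space M. (\<Sum>k. (\<xi> (Suc k) \<omega> / real (Suc k) + a k)\<^sup>2) < x} \<le> (INF m. emeasure M (E m))"
      unfolding E_def by (intro INF_greatest s12) simp
    also have "\<dots> = emeasure M (\<Inter>m. E m)"
      by (rule INF_emeasure_decseq) (use decE in auto)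
    also have "\<dots> \<le> emeasure M B1" by (rule emeasure_mono[OF sub B1m])
    finally show ?thesis .
  qed
  define D where "D = distr M (PiM UNIV (\<lambda>_. borel)) V"
  have indV: "indep_var (PiM UNIV (\<lambda>_. borel)) V (PiM UNIV (\<lambda>_. borel)) (\<lambda>\<omega>. \<lambda>i. \<xi> (Suc j0) \<omega>)"
    using indepS[of j0] unfolding V_def .
  have B1_int: "emeasure M B1 = (\<integral>\<^sup>+w. emeasure M {\<omega>\<in>space M. (\<xi> (Suc j0) \<omega> / d + a j0)\<^sup>2 \<le> x - h w} \<partial>D)"
    unfolding B1_def D_def
    by (rule indep_emeasure[OF prob_space_axioms indV, where Q="\<lambda>w z. (z 0 / d + a j0)\<^sup>2 \<le> x - h w", simplified])
       measurable
  define B0 where "B0 = {\<omega>\<in>space M. (\<xi> (Suc j0) \<omega> / d)\<^sup>2 < x - h (V \<omega>)}"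
  have B0m[measurable]: "B0 \<in> sets M" unfolding B0_def by measurable
  have B0_int: "emeasure M B0 = (\<integral>\<^sup>+w. emeasure M {\<omega>\<in>space M. (\<xi> (Suc j0) \<omega> / d)\<^sup>2 < x - h w} \<partial>D)"
    unfolding B0_def D_def
    by (rule indep_emeasure[OF prob_space_axioms indV, where Q="\<lambda>w z. (z 0 / d)\<^sup>2 < x - h w", simplified])
       measurable
  have hsplit: "(\<Sum>k. (\<xi> (Suc k) \<omega> / real (Suc k))\<^sup>2) = (\<xi> (Suc j0) \<omega> / d)\<^sup>2 + h (V \<omega>)"
    if "summable (\<lambda>k. (\<xi> (Suc k) \<omega> / real (Suc k))\<^sup>2)" for \<omega>
  proof -
    have "h (V \<omega>) = (\<Sum>i. if i = j0 then 0 else (\<xi> (Suc i) \<omega> / real (Suc i))\<^sup>2)"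
      unfolding h_def V_def by (intro suminf_cong) auto
    then show ?thesis using suminf_split_one[OF that, of j0] by (simp add: d_def)
  qed
  have Rpos: "emeasure M {\<omega>\<in>space M. h (V \<omega>) < x} \<noteq> 0"
  proof
    assume z: "emeasure M {\<omega>\<in>space M. h (V \<omega>) < x} = 0"
    have AE0: "AE \<omega> in M. \<xi> (Suc j0) \<omega> \<noteq> 0"
      by (rule AE_I[of _ _ "{\<omega>\<in>space M. \<xi> (Suc j0) \<omega> = 0}"]) (auto simp: G_point)
    have "emeasure M {\<omega>\<in>space M. (\<Sum>k. (\<xi> (Suc k) \<omega> / real (Suc k))\<^sup>2) \<le> x}
        \<le> emeasure M {\<omega>\<in>space M. h (V \<omega>) < x}"
    proof (rule emeasure_mono_AE)
      show "AE \<omega> in M. \<omega> \<in> {\<omega>\<in>space M. (\<Sum>k. (\<xi> (Suc k) \<omega> / real (Suc k))\<^sup>2) \<le> x}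
          \<longrightarrow> \<omega> \<in> {\<omega>\<in>space M. h (V \<omega>) < x}"
        using AEs AE0
      proof eventually_elim
        case (elim \<omega>)
        have p: "0 < (\<xi> (Suc j0) \<omega> / d)\<^sup>2" using elim d by simp
        have hs: "(\<Sum>k. (\<xi> (Suc k) \<omega> / real (Suc k))\<^sup>2) = (\<xi> (Suc j0) \<omega> / d)\<^sup>2 + h (V \<omega>)"
          by (rule hsplit[OF elim(1)])
        show ?case
        proof
          assume "\<omega> \<in> {\<omega>\<in>space M. (\<Sum>k. (\<xi> (Suc k) \<omega> / real (Suc k))\<^sup>2) \<le> x}"
          then have om: "\<omega> \<in> space M" and le: "(\<Sum>k. (\<xi> (Suc k) \<omega> / real (Suc k))\<^sup>2) \<le> x" by auto
          have "h (V \<omega>) < x" using p hs le by linarith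
          then show "\<omega> \<in> {\<omega>\<in>space M. h (V \<omega>) < x}" using om by simp
        qed
      qed
    qed measurable
    then show False using z pos by simp
  qed
  define F1 where "F1 = (\<lambda>s. measure M {\<omega>\<in>space M. (\<xi> (Suc j0) \<omega> / d + a j0)\<^sup>2 \<le> s})"
  define F0 where "F0 = (\<lambda>s. measure M {\<omega>\<in>space M. (\<xi> (Suc j0) \<omega> / d)\<^sup>2 < s})"
  have F1e: "emeasure M {\<omega>\<in>space M. (\<xi> (Suc j0) \<omega> / d + a j0)\<^sup>2 \<le> s} = ennreal (F1 s)" for s
    unfolding F1_def by (rule emeasure_eq_measure)
  have F0e: "emeasure M {\<omega>\<in>space M. (\<xi> (Suc j0) \<omega> / d)\<^sup>2 < s} = ennreal (F0 s)" for s
    unfolding F0_def by (rule emeasure_eq_measure)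
  have F1mono: "mono F1"
    unfolding F1_def by (intro monoI finite_measure_mono) auto
  have F0mono: "mono F0"
    unfolding F0_def by (intro monoI finite_measure_mono) auto
  have F1m[measurable]: "F1 \<in> borel_measurable borel" by (rule borel_measurable_mono[OF F1mono])
  have F0m[measurable]: "F0 \<in> borel_measurable borel" by (rule borel_measurable_mono[OF F0mono])
  have Dm: "measurable D N = measurable (PiM UNIV (\<lambda>_. borel)) N" for N :: "real measure"
    unfolding D_def by simp
  have hD[measurable]: "h \<in> borel_measurable D" using hm by (simp add: D_def)
  interpret Dp: prob_space D unfolding D_def by (rule prob_space_distr) simp
  have cmp: "ennreal (F1 s) \<le> ennreal (F0 s)" for s
  proof (cases "s > 0")
    case True
    show ?thesis using G2[OF distS[of j0] d aj0 True] by (simp add: F1e F0e)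
  next
    case False
    then have "ennreal (F1 s) = 0" using G4[of s d j0 "a j0"] d unfolding F1e by simp
    then show ?thesis by simp
  qed
  have cmp_strict: "ennreal (F1 s) < ennreal (F0 s)" if "s > 0" for s
    using G2[OF distS[of j0] d aj0 that] by (simp add: F1e F0e)
  have "(\<integral>\<^sup>+w. ennreal (F1 (x - h w)) \<partial>D) < (\<integral>\<^sup>+w. ennreal (F0 (x - h w)) \<partial>D)"
  proof (rule nn_integral_less)
    show "(\<lambda>w. ennreal (F1 (x - h w))) \<in> borel_measurable D" unfolding Dm by measurable
    show "(\<lambda>w. ennreal (F0 (x - h w))) \<in> borel_measurable D" unfolding Dm by measurable
    have "(\<integral>\<^sup>+w. ennreal (F1 (x - h w)) \<partial>D) \<le> (\<integral>\<^sup>+w. 1 \<partial>D)"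
      by (intro nn_integral_mono) (simp add: F1_def)
    also have "\<dots> = 1" by (simp add: Dp.emeasure_space_1)
    finally show "(\<integral>\<^sup>+w. ennreal (F1 (x - h w)) \<partial>D) \<noteq> \<infinity>" by (auto simp: top_unique)
    show "AE w in D. ennreal (F1 (x - h w)) \<le> ennreal (F0 (x - h w))" by (intro AE_I2 cmp)
    show "\<not> (AE w in D. ennreal (F0 (x - h w)) \<le> ennreal (F1 (x - h w)))"
    proof
      assume ae: "AE w in D. ennreal (F0 (x - h w)) \<le> ennreal (F1 (x - h w))"
      have "AE w in D. \<not> h w < x"
        using ae
      proof eventually_elim
        case (elim w)
        show ?case
        proof
          assume "h w < x"
          then have "ennreal (F1 (x - h w)) < ennreal (F0 (x - h w))" by (intro cmp_strict) simp
          then show False using elim by simp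
        qed
      qed
      then have "emeasure D {w\<in>space D. h w < x} = 0"
      proof (subst (asm) AE_iff_measurable[of "{w\<in>space D. h w < x}"])
        show "{w\<in>space D. h w < x} \<in> sets D" by measurable
      qed auto
      moreover have "emeasure D {w\<in>space D. h w < x} = emeasure M {\<omega>\<in>space M. h (V \<omega>) < x}"
      proof -
        have "{w\<in>space D. h w < x} \<in> sets (PiM UNIV (\<lambda>_. borel))"
          unfolding D_def by simp
        then have "emeasure D {w\<in>space D. h w < x} = emeasure M (V -` {w\<in>space D. h w < x} \<inter> space M)"
          unfolding D_def by (rule emeasure_distr[OF Vm])
        also have "V -` {w\<in>space D. h w < x} \<inter> space M = {\<omega>\<in>space M. h (V \<omega>) < x}"
          using measurable_space[OF Vm] unfolding D_def by auto
        finally show ?thesis .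
      qed
      ultimately show False using Rpos by simp
    qed
  qed
  then have s5: "emeasure M B1 < emeasure M B0"
    unfolding B1_int B0_int F1e F0e .
  have s7: "emeasure M B0 = emeasure M {\<omega>\<in>space M. (\<Sum>k. (\<xi> (Suc k) \<omega> / real (Suc k))\<^sup>2) < x}"
  proof (rule emeasure_eq_AE)
    show "AE \<omega> in M. (\<omega> \<in> B0) = (\<omega> \<in> {\<omega>\<in>space M. (\<Sum>k. (\<xi> (Suc k) \<omega> / real (Suc k))\<^sup>2) < x})"
      using AEs
    proof eventually_elim
      case (elim \<omega>)
      show ?case using hsplit[OF elim] unfolding B0_def by auto
    qed
  qed measurable
  show ?thesis using s3 s5 s7 by simp
qed

end

theorem lemma14:
  fixes M :: "'a measure" and \<xi> :: "nat \<Rightarrow> 'a \<Rightarrow> real"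
    and \<alpha> x\<^sub>\<alpha> c :: real and \<eta> :: "nat \<Rightarrow> real"
  assumes "prob_space M"
    and "prob_space.indep_vars M (\<lambda>_. borel) \<xi> {1..}"
    and "\<And>j. j \<ge> 1 \<Longrightarrow> distributed M lborel (\<xi> j) std_normal_density"
    and "0 < \<alpha>" and "\<alpha> < 1"
    and "measure M {\<omega> \<in> space M. shifted_series \<xi> (\<lambda>_. 0) \<omega> > x\<^sub>\<alpha>} = \<alpha>"
    and "summable (\<lambda>k. (\<eta> (Suc k))\<^sup>2)"
    and "c > 0"
    and "(1 / pi\<^sup>2) * (\<Sum>k. (\<eta> (Suc k))\<^sup>2) > c"
  shows "measure M {\<omega> \<in> space M. shifted_series \<xi> (\<lambda>_. 0) \<omega> < x\<^sub>\<alpha>}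
       > measure M {\<omega> \<in> space M. shifted_series \<xi> \<eta> \<omega> < x\<^sub>\<alpha>}"
proof -
  interpret L14 M \<xi> using assms(1-3) by (simp add: L14_def L14_axioms_def)
  define a where "a = (\<lambda>k. \<eta> (Suc k))"
  define x where "x = pi\<^sup>2 * x\<^sub>\<alpha>"
  have pp: "pi\<^sup>2 > 0" by simp
  have conv_lt: "shifted_series \<xi> b \<omega> < x\<^sub>\<alpha> \<longleftrightarrow> (\<Sum>k. (\<xi> (Suc k) \<omega> / real (Suc k) + b (Suc k))\<^sup>2) < x" for b \<omega>
    unfolding shifted_series_def x_def using pp by (simp add: divide_less_eq mult.commute)
  have conv_gt: "shifted_series \<xi> b \<omega> > x\<^sub>\<alpha> \<longleftrightarrow> (\<Sum>k. (\<xi> (Suc k) \<omega> / real (Suc k) + b (Suc k))\<^sup>2) > x" for b \<omega>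
    unfolding shifted_series_def x_def using pp by (simp add: less_divide_eq mult.commute)
  have set_eta: "{\<omega>\<in>space M. shifted_series \<xi> \<eta> \<omega> < x\<^sub>\<alpha>} = {\<omega>\<in>space M. (\<Sum>k. (\<xi> (Suc k) \<omega> / real (Suc k) + a k)\<^sup>2) < x}"
    using conv_lt[of \<eta>] unfolding a_def by simp
  have set0: "{\<omega>\<in>space M. shifted_series \<xi> (\<lambda>_. 0) \<omega> < x\<^sub>\<alpha>} = {\<omega>\<in>space M. (\<Sum>k. (\<xi> (Suc k) \<omega> / real (Suc k))\<^sup>2) < x}"
    using conv_lt[of "\<lambda>_. 0"] by simp
  have set0gt: "{\<omega>\<in>space M. shifted_series \<xi> (\<lambda>_. 0) \<omega> > x\<^sub>\<alpha>} = {\<omega>\<in>space M. (\<Sum>k. (\<xi> (Suc k) \<omega> / real (Suc k))\<^sup>2) > x}"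
    using conv_gt[of "\<lambda>_. 0"] by simp
  obtain j0 where aj0: "a j0 \<noteq> 0"
  proof (rule ccontr)
    assume "\<not> thesis"
    with that have "\<And>j. a j = 0" by blast
    then have "(\<Sum>k. (\<eta> (Suc k))\<^sup>2) = 0" unfolding a_def by simp
    then show False using assms(8,9) by simp
  qed
  have sa: "summable (\<lambda>k. (a k)\<^sup>2)" using assms(7) unfolding a_def .
  have pos: "emeasure M {\<omega>\<in>space M. (\<Sum>k. (\<xi> (Suc k) \<omega> / real (Suc k))\<^sup>2) \<le> x} \<noteq> 0"
  proof -
    have A: "{\<omega>\<in>space M. (\<Sum>k. (\<xi> (Suc k) \<omega> / real (Suc k))\<^sup>2) > x} \<in> events" by measurable
    have "{\<omega>\<in>space M. (\<Sum>k. (\<xi> (Suc k) \<omega> / real (Suc k))\<^sup>2) \<le> x}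
        = space M - {\<omega>\<in>space M. (\<Sum>k. (\<xi> (Suc k) \<omega> / real (Suc k))\<^sup>2) > x}" by auto
    then have "measure M {\<omega>\<in>space M. (\<Sum>k. (\<xi> (Suc k) \<omega> / real (Suc k))\<^sup>2) \<le> x} = 1 - \<alpha>"
      using prob_compl[OF A] assms(6) set0gt by simp
    then show ?thesis using assms(5) by (simp add: emeasure_eq_measure)
  qed
  have "emeasure M {\<omega>\<in>space M. (\<Sum>k. (\<xi> (Suc k) \<omega> / real (Suc k) + a k)\<^sup>2) < x}
       < emeasure M {\<omega>\<in>space M. (\<Sum>k. (\<xi> (Suc k) \<omega> / real (Suc k))\<^sup>2) < x}"
    by (rule main[OF sa aj0 pos])
  then show ?thesis unfolding set_eta set0 by (simp add: emeasure_eq_measure ennreal_less_iff)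
qed

end
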